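(* Let $f:[0,\infty)\to\mathbb{R}$ be a circularly symmetric surface brightness profile satisfying condition (1) and condition (2a) below, and let $p>0$. Let $f_{\rm c}$ be the convolution (over $\mathbb{R}^2$) of $f$ with the normalized gaussian beam $g_b(x,y)=\frac{p}{\pi}\,e^{-p(x^2+y^2)}$; $f_{\rm c}$ is again circularly symmetric. Then for every $r\ge 0$ \[ f_{\rm c}(r)=\frac{p}{\pi}\,e^{-pr^2}\sum_{n=0}^\infty \frac{c_{2n}(p)\,p^{2n}}{(n!)^2}\,r^{2n}. \] If moreover $f$ satisfies condition (2b), then for every $r\ge0$ \[ f_{\rm c}(r)=\frac{p}{\pi}\,e^{-pr^2}\sum_{n=0}^\infty (-1)^n\frac{c_{2n}\,p^n}{n!}\,L_n(pr^2), \] where $L_n(x)=\sum_{k=0}^n(-1)^k\binom{n}{k}\frac{x^k}{k!}$ is the Laguerre polynomial of degree $n$.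
   Context: A circularly symmetric function on the plane is identified with a function of the radius $r$. For $n\in\mathbb{N}_0$ define the radial moments $c_n=2\pi\int_0^\infty f(r)\,r^{n+1}\,dr$ and, for $p\ge0$, the generalized radial moments $c_n(p)=2\pi\int_0^\infty f(r)\,r^{n+1}e^{-pr^2}\,dr$. Condition (1): there is a constant $F$ with $0\le f(r)\le F$ for all $r\in[0,\infty)$, $c_0$ exists and $c_0>0$. Condition (2a): $c_{2n}$ exists for all $n\in\mathbb{N}_0$ and $c_n^{1/n}=o(n)$ as $n\to\infty$. Condition (2b): $c_{2n}$ exists for all $n\in\mathbb{N}_0$ and $c_n^{1/n}=o(n^{1/2})$ as $n\to\infty$. *)

theory Defs
  imports "HOL-Analysis.Analysis" "HOL-Library.Landau_Symbols"
begin

definition radial_moment :: "(real \<Rightarrow> real) \<Rightarrow> nat \<Rightarrow> real" where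
  "radial_moment f n = 2 * pi * (LBINT r:{0..}. f r * r ^ (n + 1))"

definition gen_radial_moment :: "(real \<Rightarrow> real) \<Rightarrow> nat \<Rightarrow> real \<Rightarrow> real" where
  "gen_radial_moment f n p = 2 * pi * (LBINT r:{0..}. f r * r ^ (n + 1) * exp (- p * r\<^sup>2))"

definition moment_exists :: "(real \<Rightarrow> real) \<Rightarrow> nat \<Rightarrow> bool" where
  "moment_exists f n \<longleftrightarrow> set_integrable lborel {0..} (\<lambda>r. f r * r ^ (n + 1))"

definition cond1 :: "(real \<Rightarrow> real) \<Rightarrow> bool" where
  "cond1 f \<longleftrightarrow> (\<exists>F. \<forall>r\<ge>0. 0 \<le> f r \<and> f r \<le> F) \<and> moment_exists f 0 \<and> radial_moment f 0 > 0"

definition cond2a :: "(real \<Rightarrow> real) \<Rightarrow> bool" where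
  "cond2a f \<longleftrightarrow> (\<forall>n. moment_exists f (2 * n)) \<and>
     (\<lambda>n. radial_moment f n powr (1 / real n)) \<in> o(\<lambda>n. real n)"

definition cond2b :: "(real \<Rightarrow> real) \<Rightarrow> bool" where
  "cond2b f \<longleftrightarrow> (\<forall>n. moment_exists f (2 * n)) \<and>
     (\<lambda>n. radial_moment f n powr (1 / real n)) \<in> o(\<lambda>n. sqrt (real n))"

definition gauss_beam :: "real \<Rightarrow> real \<times> real \<Rightarrow> real" where
  "gauss_beam p z = p / pi * exp (- p * (fst z ^ 2 + snd z ^ 2))"

definition conv_beam :: "(real \<Rightarrow> real) \<Rightarrow> real \<Rightarrow> real \<times> real \<Rightarrow> real" where
  "conv_beam f p z = (LINT w|lborel. f (norm w) * gauss_beam p (z - w))"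

definition laguerre :: "nat \<Rightarrow> real \<Rightarrow> real" where
  "laguerre n x = (\<Sum>k\<le>n. (-1) ^ k * real (n choose k) * x ^ k / fact k)"

end

theory Submission
  imports Defs "HOL-Probability.Distributions"
begin

lemma gauss_mom:
  "has_bochner_integral lborel (\<lambda>x::real. exp (- x\<^sup>2) * x ^ k)
     (if even k then sqrt pi * fact k / (2 ^ k * fact (k div 2)) else 0)"
proof (cases "even k")
  case True
  then obtain j where k: "k = 2 * j" by (auto elim: evenE)
  have "has_bochner_integral lborel (\<lambda>x::real. exp (- x\<^sup>2) * x ^ k)
     (2 *\<^sub>R ((sqrt pi / 2) * (fact (2 * j) / (2 ^ (2 * j) * fact j))))"
    unfolding k by (rule has_bochner_integral_even_function[OF gaussian_moment_even_pos]) auto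
  then show ?thesis using True k by simp
next
  case False
  then obtain j where k: "k = 2 * j + 1" using oddE by blast
  have "has_bochner_integral lborel (\<lambda>x::real. exp (- x\<^sup>2) * x ^ k) 0"
    unfolding k by (rule has_bochner_integral_odd_function[OF gaussian_moment_odd_pos]) auto
  then show ?thesis using False by simp
qed

interpretation lborel_pair: pair_sigma_finite lborel lborel ..

lemma prod_has_integral:
  fixes F G :: "real \<Rightarrow> real"
  assumes F: "has_bochner_integral lborel F A" and G: "has_bochner_integral lborel G B"
  shows "has_bochner_integral (lborel::(real\<times>real) measure) (\<lambda>w. F (fst w) * G (snd w)) (A * B)"
proof -
  have iF: "integrable lborel F" and iG: "integrable lborel G"
    using F G by (auto simp: has_bochner_integral_iff)
  have mF[measurable]: "F \<in> borel_measurable borel" and mG[measurable]: "G \<in> borel_measurable borel"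
    using iF iG by auto
  have int: "integrable (lborel \<Otimes>\<^sub>M lborel) (\<lambda>w. F (fst w) * G (snd w))"
  proof (rule lborel_pair.Fubini_integrable)
    show "(\<lambda>w. F (fst w) * G (snd w)) \<in> borel_measurable (lborel \<Otimes>\<^sub>M lborel)" by measurable
    have "integrable lborel (\<lambda>x. norm (F x) * (\<integral>y. norm (G y) \<partial>lborel))"
      using iF by (intro integrable_mult_left) auto
    moreover have "(\<lambda>x. \<integral>y. norm (F (fst (x, y)) * G (snd (x, y))) \<partial>lborel) = (\<lambda>x. norm (F x) * (\<integral>y. norm (G y) \<partial>lborel))"
      by (simp add: abs_mult)
    ultimately show "integrable lborel (\<lambda>x. \<integral>y. norm (F (fst (x, y)) * G (snd (x, y))) \<partial>lborel)"
      by simp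
    show "AE x in lborel. integrable lborel (\<lambda>y. F (fst (x, y)) * G (snd (x, y)))"
      using iG by (auto intro!: integrable_mult_right)
  qed
  have "integral\<^sup>L (lborel \<Otimes>\<^sub>M lborel) (\<lambda>(x, y). F x * G y) = (\<integral>x. (\<integral>y. F x * G y \<partial>lborel) \<partial>lborel)"
    using int by (intro lborel_pair.integral_fst[symmetric]) (simp add: case_prod_beta')
  also have "\<dots> = (\<integral>x. F x * B \<partial>lborel)"
    using G by (simp add: has_bochner_integral_integral_eq)
  also have "\<dots> = A * B"
    using F by (simp add: has_bochner_integral_integral_eq)
  finally have "integral\<^sup>L (lborel \<Otimes>\<^sub>M lborel) (\<lambda>w. F (fst w) * G (snd w)) = A * B"
    by (simp add: case_prod_beta')
  with int show ?thesis unfolding lborel_prod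
    by (simp add: has_bochner_integral_iff)
qed

definition gm :: "nat \<Rightarrow> real" where
  "gm k = (if even k then sqrt pi * fact k / (2 ^ k * fact (k div 2)) else 0)"

lemma gm_sum:
  "(\<Sum>k\<le>2*n. real (2*n choose k) * a ^ k * b ^ (2*n - k) * (gm k * gm (2*n - k)))
     = pi * fact (2*n) / (4^n * fact n) * (a\<^sup>2 + b\<^sup>2) ^ n"
proof -
  let ?T = "\<lambda>k. real (2*n choose k) * a ^ k * b ^ (2*n - k) * (gm k * gm (2*n - k))"
  have "(\<Sum>k\<le>2*n. ?T k) = (\<Sum>k\<in>(\<lambda>j. 2*j) ` {..n}. ?T k)"
    by (rule sum.mono_neutral_right) (auto simp: gm_def elim!: evenE)
  also have "\<dots> = (\<Sum>j\<le>n. ?T (2*j))"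
    by (subst sum.reindex) (auto simp: inj_on_def)
  also have "\<dots> = (\<Sum>j\<le>n. pi * fact (2*n) / (4^n * fact n) * (real (n choose j) * (a\<^sup>2) ^ j * (b\<^sup>2) ^ (n - j)))"
  proof (rule sum.cong[OF refl])
    fix j assume j: "j \<in> {..n}"
    then have jn: "j \<le> n" by simp
    have e1: "2*n - 2*j = 2*(n-j)" by simp
    have c1: "real (2*n choose (2*j)) = fact (2*n) / (fact (2*j) * fact (2*(n-j)))"
      using jn by (subst binomial_fact) (auto simp: e1)
    have c2: "real (n choose j) = fact n / (fact j * fact (n-j))"
      using jn by (subst binomial_fact) auto
    have sq: "sqrt pi * sqrt pi = pi" by simp
    have p4: "(2::real) ^ (2*j) * 2 ^ (2*(n-j)) = 4 ^ n"
      using jn by (simp add: power_add[symmetric] power_mult)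
    show "?T (2*j) = pi * fact (2*n) / (4^n * fact n) * (real (n choose j) * (a\<^sup>2) ^ j * (b\<^sup>2) ^ (n - j))"
      unfolding gm_def e1 c1 c2
      by (simp add: power_mult[symmetric] field_simps p4[symmetric] mult_ac)
  qed
  also have "\<dots> = pi * fact (2*n) / (4^n * fact n) * (a\<^sup>2 + b\<^sup>2) ^ n"
    by (simp add: binomial_ring sum_distrib_left)
  finally show ?thesis .
qed


lemma norm_sq_prod: "(norm (w::real\<times>real))\<^sup>2 = (fst w)\<^sup>2 + (snd w)\<^sup>2"
  by (simp add: norm_prod_def)

lemma gauss2d:
  "has_bochner_integral (lborel::(real\<times>real) measure)
     (\<lambda>w. exp (- (norm w)\<^sup>2) * (a * fst w + b * snd w) ^ (2*n))
     (pi * fact (2*n) / (4^n * fact n) * (a\<^sup>2 + b\<^sup>2) ^ n)"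
proof -
  have eq: "(\<lambda>w. exp (- (norm w)\<^sup>2) * (a * fst w + b * snd w) ^ (2*n)) =
    (\<lambda>w. \<Sum>k\<le>2*n. real (2*n choose k) * a ^ k * b ^ (2*n - k) *
       ((exp (- (fst w)\<^sup>2) * fst w ^ k) * (exp (- (snd w)\<^sup>2) * snd w ^ (2*n-k))))"
  proof
    fix w :: "real \<times> real"
    have "exp (- (norm w)\<^sup>2) = exp (- (fst w)\<^sup>2) * exp (- (snd w)\<^sup>2)"
      by (simp add: norm_sq_prod exp_add[symmetric])
    then show "exp (- (norm w)\<^sup>2) * (a * fst w + b * snd w) ^ (2*n) = (\<Sum>k\<le>2*n. real (2*n choose k) * a ^ k * b ^ (2*n - k) *
       ((exp (- (fst w)\<^sup>2) * fst w ^ k) * (exp (- (snd w)\<^sup>2) * snd w ^ (2*n-k))))"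
      by (simp add: binomial_ring sum_distrib_left power_mult_distrib mult_ac)
  qed
  have "has_bochner_integral (lborel::(real\<times>real) measure)
    (\<lambda>w. \<Sum>k\<le>2*n. real (2*n choose k) * a ^ k * b ^ (2*n - k) *
       ((exp (- (fst w)\<^sup>2) * fst w ^ k) * (exp (- (snd w)\<^sup>2) * snd w ^ (2*n-k))))
    (\<Sum>k\<le>2*n. real (2*n choose k) * a ^ k * b ^ (2*n - k) * (gm k * gm (2*n - k)))"
    by (intro has_bochner_integral_sum has_bochner_integral_mult_right prod_has_integral
        gauss_mom[folded gm_def])
  then show ?thesis unfolding eq gm_sum .
qed

definition qf :: "real\<times>real \<Rightarrow> real\<times>real \<Rightarrow> real" where
  "qf z w = fst z * fst w + snd z * snd w"

lemma qf_scale: "qf z (T *\<^sub>R w) = T * qf z w"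
  by (simp add: qf_def algebra_simps)

lemma measurable_qf[measurable]: "qf z \<in> borel_measurable borel"
  unfolding qf_def by (intro borel_measurable_continuous_onI continuous_intros)

lemma cball_borel[measurable]: "cball (x::'a::metric_space) r \<in> sets borel"
  by (simp add: borel_closed)

lemma nn_integral_scale2:
  fixes h :: "real\<times>real \<Rightarrow> ennreal"
  assumes [measurable]: "h \<in> borel_measurable borel" and T: "T \<noteq> 0"
  shows "(\<integral>\<^sup>+x. h x \<partial>lborel) = ennreal (T^2) * (\<integral>\<^sup>+x. h (T *\<^sub>R x) \<partial>lborel)"
  by (subst lborel_affine[OF T, of 0])
     (simp add: nn_integral_density nn_integral_distr nn_integral_cmult power2_eq_square)

lemma ball_scale:
  assumes T: "T > 0"
  shows "(\<integral>\<^sup>+ w. ennreal (qf z w ^ m) * indicator (cball 0 T) w \<partial>lborel) =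
    ennreal (T^(m+2)) * (\<integral>\<^sup>+ w. ennreal (qf z w ^ m) * indicator (cball 0 1) w \<partial>lborel)"
proof -
  have "(\<integral>\<^sup>+ w. ennreal (qf z w ^ m) * indicator (cball 0 T) w \<partial>lborel) =
    ennreal (T^2) * (\<integral>\<^sup>+ w. ennreal (qf z (T *\<^sub>R w) ^ m) * indicator (cball 0 T) (T *\<^sub>R w) \<partial>lborel)"
    using T by (intro nn_integral_scale2) auto
  also have "(\<lambda>w. ennreal (qf z (T *\<^sub>R w) ^ m) * indicator (cball 0 T) (T *\<^sub>R w)) =
     (\<lambda>w. ennreal (T^m) * (ennreal (qf z w ^ m) * indicator (cball 0 1) w))"
  proof
    fix w :: "real \<times> real"
    have "(T *\<^sub>R w \<in> cball 0 T) = (w \<in> cball 0 1)"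
      using T by (simp add: mult_le_cancel_left1)
    moreover have "ennreal (qf z (T *\<^sub>R w) ^ m) = ennreal (T^m) * ennreal (qf z w ^ m)"
    proof -
      have "qf z (T *\<^sub>R w) ^ m = T^m * qf z w ^ m" by (simp add: qf_scale power_mult_distrib)
      then show ?thesis using T by (simp only:) (rule ennreal_mult', simp)
    qed
    ultimately show "ennreal (qf z (T *\<^sub>R w) ^ m) * indicator (cball 0 T) (T *\<^sub>R w) =
      ennreal (T^m) * (ennreal (qf z w ^ m) * indicator (cball 0 1) w)"
      by (simp add: indicator_def mult_ac)
  qed
  also have "ennreal (T^2) * (\<integral>\<^sup>+ w. ennreal (T^m) * (ennreal (qf z w ^ m) * indicator (cball 0 1) w) \<partial>lborel)
     = ennreal (T^2) * (ennreal (T^m) * (\<integral>\<^sup>+ w. ennreal (qf z w ^ m) * indicator (cball 0 1) w \<partial>lborel))"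
    by (subst nn_integral_cmult) auto
  also have "\<dots> = (ennreal (T^2) * ennreal (T^m)) * (\<integral>\<^sup>+ w. ennreal (qf z w ^ m) * indicator (cball 0 1) w \<partial>lborel)"
    by (rule mult.assoc[symmetric])
  also have "ennreal (T^2) * ennreal (T^m) = ennreal (T^(m+2))"
    using T by (subst ennreal_mult[symmetric]) (auto simp: power_add mult.commute power2_eq_square)
  finally show ?thesis .
qed

lemma abs_fst_le_norm: "\<bar>fst (w::real\<times>real)\<bar> \<le> norm w"
proof -
  have "(fst w)\<^sup>2 \<le> (norm w)\<^sup>2" by (simp add: norm_sq_prod)
  then show ?thesis by (metis abs_le_square_iff abs_norm_cancel)
qed

lemma abs_snd_le_norm: "\<bar>snd (w::real\<times>real)\<bar> \<le> norm w"
proof -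
  have "(snd w)\<^sup>2 \<le> (norm w)\<^sup>2" by (simp add: norm_sq_prod)
  then show ?thesis by (metis abs_le_square_iff abs_norm_cancel)
qed

lemma A_finite: "(\<integral>\<^sup>+ w. ennreal (qf z w ^ (2*n)) * indicator (cball 0 1) w \<partial>lborel) < \<infinity>"
proof -
  define c where "c = \<bar>fst z\<bar> + \<bar>snd z\<bar>"
  have "(\<integral>\<^sup>+ w. ennreal (qf z w ^ (2*n)) * indicator (cball 0 1) w \<partial>lborel) \<le>
        (\<integral>\<^sup>+ w. ennreal (c ^ (2*n)) * indicator (cball 0 1) (w::real\<times>real) \<partial>lborel)"
  proof (rule nn_integral_mono)
    fix w :: "real \<times> real" assume "w \<in> space lborel"
    show "ennreal (qf z w ^ (2*n)) * indicator (cball 0 1) w \<le> ennreal (c ^ (2*n)) * indicator (cball 0 1) w"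
    proof (cases "w \<in> cball 0 1")
      case True
      then have "norm w \<le> 1" by simp
      then have "\<bar>fst w\<bar> \<le> 1" "\<bar>snd w\<bar> \<le> 1" using abs_fst_le_norm[of w] abs_snd_le_norm[of w] by auto
      then have h: "\<bar>fst z\<bar> * \<bar>fst w\<bar> + \<bar>snd z\<bar> * \<bar>snd w\<bar> \<le> \<bar>fst z\<bar> * 1 + \<bar>snd z\<bar> * 1"
        by (intro add_mono mult_left_mono) auto
      have "\<bar>qf z w\<bar> \<le> \<bar>fst z\<bar> * \<bar>fst w\<bar> + \<bar>snd z\<bar> * \<bar>snd w\<bar>"
        unfolding qf_def using abs_triangle_ineq[of "fst z * fst w" "snd z * snd w"] by (simp add: abs_mult)
      then have "\<bar>qf z w\<bar> \<le> \<bar>c\<bar>" using h unfolding c_def by simp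
      then have "(qf z w)\<^sup>2 \<le> c\<^sup>2" by (simp add: abs_le_square_iff)
      then have "((qf z w)\<^sup>2) ^ n \<le> (c\<^sup>2) ^ n" by (rule power_mono) auto
      then have "qf z w ^ (2*n) \<le> c ^ (2*n)" by (simp add: power_mult)
      then show ?thesis using True by (simp add: ennreal_leI)
    qed simp
  qed
  also have "\<dots> = ennreal (c ^ (2*n)) * emeasure lborel (cball (0::real\<times>real) 1)"
    by (simp add: nn_integral_cmult_indicator)
  also have "\<dots> < \<infinity>"
    using emeasure_bounded_finite[of "cball (0::real\<times>real) 1"] by (simp add: ennreal_mult_less_top)
  finally show ?thesis .
qed

definition Aq :: "real\<times>real \<Rightarrow> nat \<Rightarrow> ennreal" where
  "Aq z n = (\<integral>\<^sup>+ w. ennreal (qf z w ^ (2*n)) * indicator (cball 0 1) w \<partial>lborel)"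

lemma ball_q: "(\<integral>\<^sup>+ w. ennreal (qf z w ^ (2*n)) * indicator (cball 0 a) w \<partial>lborel) =
   Aq z n * ennreal (if 0 \<le> a then a^(2*n+2) else 0)"
proof (cases "a > 0")
  case True
  then show ?thesis using ball_scale[OF True, of z "2*n"] by (simp add: Aq_def mult.commute)
next
  case False
  have "(\<integral>\<^sup>+ w. ennreal (qf z w ^ (2*n)) * indicator (cball 0 a) w \<partial>lborel) = (\<integral>\<^sup>+ w. (0::ennreal) \<partial>(lborel::(real\<times>real) measure))"
  proof (rule nn_integral_cong_AE)
    show "AE w in lborel. ennreal (qf z w ^ (2*n)) * indicator (cball 0 a) w = 0"
      using AE_lborel_singleton[of "0::real\<times>real"]
    proof eventually_elim
      case (elim w)
      then have "norm w > 0" by simp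
      then have "\<not> norm w \<le> a" using False by linarith
      then have "w \<notin> cball 0 a" by simp
      then show ?case by simp
    qed
  qed
  then show ?thesis using False by (cases "a = 0") auto
qed

lemma dens_atMost:
  "(\<integral>\<^sup>+ s. ennreal (indicator {0..} s * ((2 * real n + 2) * s^(2*n+1))) * indicator {..a} s \<partial>lborel) =
    ennreal (if 0 \<le> a then a^(2*n+2) else 0)"
proof (cases "0 \<le> a")
  case True
  have "(\<integral>\<^sup>+ s. ennreal (indicator {0..} s * ((2 * real n + 2) * s^(2*n+1))) * indicator {..a} s \<partial>lborel) =
     (\<integral>\<^sup>+ s. ennreal ((2 * real n + 2) * s^(2*n+1)) * indicator {0..a} s \<partial>lborel)"
    by (intro nn_integral_cong) (auto split: split_indicator)
  also have "\<dots> = ennreal (a^(2*n+2) - 0^(2*n+2))"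
  proof (rule nn_integral_FTC_Icc)
    fix x :: real assume "x \<in> {0..a}"
    show "((\<lambda>s. s^(2*n+2)) has_real_derivative (2 * real n + 2) * x^(2*n+1)) (at x)"
    proof -
      have "((\<lambda>s. s^(2*n+2)) has_real_derivative real (2*n+2) * x^(2*n+2-Suc 0)) (at x)"
        by (rule DERIV_pow)
      moreover have "real (2*n+2) * x^(2*n+2-Suc 0) = (2 * real n + 2) * x^(2*n+1)" by simp
      ultimately show ?thesis by (simp only:)
    qed
    show "0 \<le> (2 * real n + 2) * x^(2*n+1)" using \<open>x \<in> {0..a}\<close> by auto
  qed (use True in auto)
  finally show ?thesis using True by simp
next
  case False
  have "(\<integral>\<^sup>+ s. ennreal (indicator {0..} s * ((2 * real n + 2) * s^(2*n+1))) * indicator {..a} s \<partial>lborel) = (\<integral>\<^sup>+ s. (0::ennreal) \<partial>(lborel::real measure))"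
    using False by (intro nn_integral_cong) (auto split: split_indicator)
  then show ?thesis using False by simp
qed

lemma push:
  "distr (density lborel (\<lambda>w. ennreal (qf z w ^ (2*n)))) borel norm =
   density lborel (\<lambda>s. Aq z n * ennreal (indicator {0..} s * ((2 * real n + 2) * s^(2*n+1))))"
  (is "?M = ?N")
proof (rule measure_eqI_generator_eq[where E="range atMost" and \<Omega>=UNIV and A="\<lambda>i. {..real i}"])
  show "Int_stable (range atMost :: real set set)"
    by (auto simp: Int_stable_def)
  show "range atMost \<subseteq> Pow (UNIV :: real set)" by auto
  show "sets ?M = sigma_sets UNIV (range atMost)" "sets ?N = sigma_sets UNIV (range atMost)"
    by (simp_all add: borel_eq_atMost)
  show "range (\<lambda>i. {..real i}) \<subseteq> range atMost" by auto
  show "(\<Union>i. {..real i}) = (UNIV :: real set)"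
    by (auto intro: real_arch_simple)
  have eqM: "emeasure ?M {..a} = Aq z n * ennreal (if 0 \<le> a then a^(2*n+2) else 0)" for a :: real
  proof -
    have "norm -` {..a} \<inter> space (density lborel (\<lambda>w. ennreal (qf z w ^ (2*n)))) = cball (0::real\<times>real) a"
      by auto
    then show ?thesis
      by (simp add: emeasure_distr emeasure_density ball_q)
  qed
  have eqN: "emeasure ?N {..a} = Aq z n * ennreal (if 0 \<le> a then a^(2*n+2) else 0)" for a :: real
  proof -
    have "emeasure ?N {..a} = (\<integral>\<^sup>+ s. Aq z n * (ennreal (indicator {0..} s * ((2 * real n + 2) * s^(2*n+1))) * indicator {..a} s) \<partial>lborel)"
      by (subst emeasure_density) (auto simp: mult.assoc)
    also have "\<dots> = Aq z n * (\<integral>\<^sup>+ s. ennreal (indicator {0..} s * ((2 * real n + 2) * s^(2*n+1))) * indicator {..a} s \<partial>lborel)"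
      by (rule nn_integral_cmult) auto
    finally show ?thesis by (simp only: dens_atMost)
  qed
  show "emeasure ?M X = emeasure ?N X" if "X \<in> range atMost" for X
    using that eqM eqN by auto
  show "emeasure ?M {..real i} \<noteq> \<infinity>" for i
    using eqM A_finite[of z n] by (simp add: Aq_def ennreal_mult_eq_top_iff)
qed

lemma radial_nn:
  fixes g :: "real \<Rightarrow> ennreal"
  assumes [measurable]: "g \<in> borel_measurable borel"
  shows "(\<integral>\<^sup>+ w. g (norm w) * ennreal (qf z w ^ (2*n)) \<partial>lborel) =
    Aq z n * (\<integral>\<^sup>+ s. g s * ennreal (indicator {0..} s * ((2 * real n + 2) * s^(2*n+1))) \<partial>lborel)"
proof -
  have "(\<integral>\<^sup>+ w. g (norm w) * ennreal (qf z w ^ (2*n)) \<partial>lborel) =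
     (\<integral>\<^sup>+ w. g (norm w) \<partial>density lborel (\<lambda>w. ennreal (qf z w ^ (2*n))))"
    by (subst nn_integral_density) (auto simp: mult.commute)
  also have "\<dots> = (\<integral>\<^sup>+ s. g s \<partial>distr (density lborel (\<lambda>w. ennreal (qf z w ^ (2*n)))) borel norm)"
    by (subst nn_integral_distr) auto
  also have "\<dots> = (\<integral>\<^sup>+ s. g s \<partial>density lborel (\<lambda>s. Aq z n * ennreal (indicator {0..} s * ((2 * real n + 2) * s^(2*n+1)))))"
    by (simp only: push)
  also have "\<dots> = (\<integral>\<^sup>+ s. Aq z n * (g s * ennreal (indicator {0..} s * ((2 * real n + 2) * s^(2*n+1)))) \<partial>lborel)"
    by (subst nn_integral_density) (auto simp: mult_ac)
  also have "\<dots> = Aq z n * (\<integral>\<^sup>+ s. g s * ennreal (indicator {0..} s * ((2 * real n + 2) * s^(2*n+1))) \<partial>lborel)"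
    by (rule nn_integral_cmult) auto
  finally show ?thesis .
qed

lemma qf_even_nonneg: "0 \<le> qf z w ^ (2*n)"
  by (simp add: power_mult)

lemma Aq_val: "Aq z n = ennreal (pi * fact (2*n) * ((fst z)\<^sup>2 + (snd z)\<^sup>2)^n / (4^n * fact n * ((real n + 1) * fact n)))"
proof -
  define V where "V = pi * fact (2*n) / (4^n * fact n) * ((fst z)\<^sup>2 + (snd z)\<^sup>2) ^ n"
  define c :: real where "c = (real n + 1) * fact n"
  have c: "c > 0" unfolding c_def by (intro mult_pos_pos) auto
  have V: "V \<ge> 0" unfolding V_def by simp
  have "(\<integral>\<^sup>+ w. ennreal (exp (- (norm w)\<^sup>2)) * ennreal (qf z w ^ (2*n)) \<partial>lborel) =
     Aq z n * (\<integral>\<^sup>+ s. ennreal (exp (- s\<^sup>2)) * ennreal (indicator {0..} s * ((2 * real n + 2) * s^(2*n+1))) \<partial>lborel)"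
    by (rule radial_nn) auto
  moreover have "(\<integral>\<^sup>+ w. ennreal (exp (- (norm w)\<^sup>2)) * ennreal (qf z w ^ (2*n)) \<partial>lborel) = ennreal V"
  proof -
    have hb: "has_bochner_integral lborel (\<lambda>w. exp (- (norm w)\<^sup>2) * qf z w ^ (2*n)) V"
      using gauss2d[of "fst z" "snd z" n] unfolding V_def qf_def .
    have "(\<integral>\<^sup>+ w. ennreal (exp (- (norm w)\<^sup>2)) * ennreal (qf z w ^ (2*n)) \<partial>lborel) =
          (\<integral>\<^sup>+ w. ennreal (exp (- (norm w)\<^sup>2) * qf z w ^ (2*n)) \<partial>lborel)"
      by (intro nn_integral_cong) (simp add: ennreal_mult qf_even_nonneg)
    also have "\<dots> = ennreal V"
      using hb by (subst nn_integral_eq_integral) (auto simp: has_bochner_integral_iff qf_even_nonneg)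
    finally show ?thesis .
  qed
  moreover have "(\<integral>\<^sup>+ s. ennreal (exp (- s\<^sup>2)) * ennreal (indicator {0..} s * ((2 * real n + 2) * s^(2*n+1))) \<partial>lborel) = ennreal c"
  proof -
    have hb: "has_bochner_integral lborel (\<lambda>s. (2 * real n + 2) * (indicator {0..} s *\<^sub>R (exp (- s\<^sup>2) * s ^ (2*n+1)))) ((2 * real n + 2) * (fact n / 2))"
      by (intro has_bochner_integral_mult_right gaussian_moment_odd_pos)
    have eq: "(2 * real n + 2) * (fact n / 2) = c" unfolding c_def by (simp add: field_simps)
    have "(\<integral>\<^sup>+ s. ennreal (exp (- s\<^sup>2)) * ennreal (indicator {0..} s * ((2 * real n + 2) * s^(2*n+1))) \<partial>lborel) =
          (\<integral>\<^sup>+ s. ennreal ((2 * real n + 2) * (indicator {0..} s *\<^sub>R (exp (- s\<^sup>2) * s ^ (2*n+1)))) \<partial>lborel)"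
      by (intro nn_integral_cong) (auto simp: ennreal_mult[symmetric] split: split_indicator intro!: arg_cong[where f=ennreal])
    also have "\<dots> = ennreal c"
      using hb unfolding eq
      by (subst nn_integral_eq_integral) (auto simp: has_bochner_integral_iff split: split_indicator)
    finally show ?thesis .
  qed
  ultimately have eq: "Aq z n * ennreal c = ennreal V" by simp
  have "Aq z n = Aq z n * ennreal c * ennreal (1/c)"
    using c by (simp add: mult.assoc ennreal_mult[symmetric])
  also have "\<dots> = ennreal (V / c)"
    using eq c V by (simp add: ennreal_mult[symmetric] divide_inverse)
  finally show ?thesis unfolding V_def c_def by (simp add: field_simps)
qed

lemma aux_cancel:
  fixes m E F X :: real
  assumes "m \<noteq> 0" "E \<noteq> 0" "F \<noteq> 0"
  shows "X / (E * F * (m * F)) * (2 * m) = 2 * X / (E * F\<^sup>2)"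
  using assms by (simp add: field_simps power2_eq_square)

lemma radial_final:
  fixes g :: "real \<Rightarrow> ennreal"
  assumes [measurable]: "g \<in> borel_measurable borel"
  shows "(\<integral>\<^sup>+ w. g (norm w) * ennreal (qf z w ^ (2*n)) \<partial>lborel) =
    ennreal (2 * pi * fact (2*n) * ((fst z)\<^sup>2 + (snd z)\<^sup>2)^n / (4^n * (fact n)\<^sup>2)) *
    (\<integral>\<^sup>+ s. g s * ennreal (indicator {0..} s * s^(2*n+1)) \<partial>lborel)"
proof -
  have "(\<integral>\<^sup>+ w. g (norm w) * ennreal (qf z w ^ (2*n)) \<partial>lborel) =
    Aq z n * (\<integral>\<^sup>+ s. g s * ennreal (indicator {0..} s * ((2 * real n + 2) * s^(2*n+1))) \<partial>lborel)"
    by (rule radial_nn) auto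
  also have "(\<integral>\<^sup>+ s. g s * ennreal (indicator {0..} s * ((2 * real n + 2) * s^(2*n+1))) \<partial>lborel) =
     (\<integral>\<^sup>+ s. ennreal (2 * real n + 2) * (g s * ennreal (indicator {0..} s * s^(2*n+1))) \<partial>lborel)"
  proof (intro nn_integral_cong)
    fix s :: real
    have "ennreal (indicator {0..} s * ((2 * real n + 2) * s^(2*n+1))) = ennreal (2 * real n + 2) * ennreal (indicator {0..} s * s^(2*n+1))"
      by (subst ennreal_mult'[symmetric]) (auto simp: mult_ac)
    then show "g s * ennreal (indicator {0..} s * ((2 * real n + 2) * s^(2*n+1))) = ennreal (2 * real n + 2) * (g s * ennreal (indicator {0..} s * s^(2*n+1)))"
      by (simp add: mult_ac)
  qed
  also have "\<dots> = ennreal (2 * real n + 2) * (\<integral>\<^sup>+ s. g s * ennreal (indicator {0..} s * s^(2*n+1)) \<partial>lborel)"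
    by (rule nn_integral_cmult) auto
  also have "Aq z n * \<dots> = (Aq z n * ennreal (2 * real n + 2)) * (\<integral>\<^sup>+ s. g s * ennreal (indicator {0..} s * s^(2*n+1)) \<partial>lborel)"
    by (simp add: mult.assoc)
  also have "Aq z n * ennreal (2 * real n + 2) = ennreal (2 * pi * fact (2*n) * ((fst z)\<^sup>2 + (snd z)\<^sup>2)^n / (4^n * (fact n)\<^sup>2))"
  proof -
    have ne: "real n + 1 \<noteq> 0" by linarith
    have "pi * fact (2*n) * ((fst z)\<^sup>2 + (snd z)\<^sup>2)^n / (4^n * fact n * ((real n + 1) * fact n)) * (2 * real n + 2)
        = 2 * pi * fact (2*n) * ((fst z)\<^sup>2 + (snd z)\<^sup>2)^n / (4^n * (fact n)\<^sup>2)"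
      using ne aux_cancel[of "real n + 1" "4^n" "fact n" "pi * fact (2*n) * ((fst z)\<^sup>2 + (snd z)\<^sup>2)^n"]
      by (simp add: algebra_simps)
    then show ?thesis unfolding Aq_val
      by (subst ennreal_mult[symmetric]) auto
  qed
  finally show ?thesis .
qed

lemma gauss1:
  assumes p: "p > 0"
  shows "has_bochner_integral lborel (\<lambda>x. exp (- p * (x - a)\<^sup>2)) (sqrt (pi / p))"
proof -
  have eq: "(\<lambda>x. exp (- p * (x - a)\<^sup>2)) = (\<lambda>x. sqrt (pi / p) * normal_density a (1 / sqrt (2 * p)) x)"
  proof
    fix x
    have s: "sqrt (2 * pi * (1 / sqrt (2 * p))\<^sup>2) = sqrt (pi / p)"
      using p by (simp add: power_divide)
    have q: "(1 / sqrt (2 * p))\<^sup>2 = 1 / (2 * p)" using p by (simp add: power_divide)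
    have e: "(x - a)\<^sup>2 / (2 * (1 / sqrt (2 * p))\<^sup>2) = p * (x - a)\<^sup>2"
      unfolding q using p by simp
    show "exp (- p * (x - a)\<^sup>2) = sqrt (pi / p) * normal_density a (1 / sqrt (2 * p)) x"
      unfolding normal_density_def s using p by (simp add: q)
  qed
  have "has_bochner_integral lborel (\<lambda>x. sqrt (pi / p) * normal_density a (1 / sqrt (2 * p)) x) (sqrt (pi / p) * 1)"
    by (intro has_bochner_integral_mult_right)
       (use p in \<open>simp add: has_bochner_integral_iff integrable_normal_density integral_normal_density\<close>)
  then show ?thesis unfolding eq by simp
qed

lemma gb_integral:
  assumes p: "p > 0"
  shows "has_bochner_integral lborel (\<lambda>w. gauss_beam p (z - w)) 1"
proof -
  have eq: "(\<lambda>w. gauss_beam p (z - w)) = (\<lambda>w. p / pi * (exp (- p * (fst w - fst z)\<^sup>2) * exp (- p * (snd w - snd z)\<^sup>2)))"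
  proof
    fix w :: "real \<times> real"
    have "(fst z - fst w)\<^sup>2 = (fst w - fst z)\<^sup>2" "(snd z - snd w)\<^sup>2 = (snd w - snd z)\<^sup>2"
      by (simp_all add: power2_commute)
    then show "gauss_beam p (z - w) = p / pi * (exp (- p * (fst w - fst z)\<^sup>2) * exp (- p * (snd w - snd z)\<^sup>2))"
      unfolding gauss_beam_def by (simp add: exp_add[symmetric] algebra_simps)
  qed
  have "has_bochner_integral lborel (\<lambda>w. p / pi * (exp (- p * (fst w - fst z)\<^sup>2) * exp (- p * (snd w - snd z)\<^sup>2)))
      (p / pi * (sqrt (pi / p) * sqrt (pi / p)))"
    by (intro has_bochner_integral_mult_right prod_has_integral gauss1 p)
  moreover have "p / pi * (sqrt (pi / p) * sqrt (pi / p)) = 1"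
    using p by simp
  ultimately show ?thesis unfolding eq by simp
qed

lemma nn_integral_reflect2:
  fixes h :: "real\<times>real \<Rightarrow> ennreal"
  assumes [measurable]: "h \<in> borel_measurable borel"
  shows "(\<integral>\<^sup>+x. h x \<partial>lborel) = (\<integral>\<^sup>+x. h (- x) \<partial>lborel)"
  using nn_integral_scale2[of h "-1"] by simp

lemma exp_pair_sums:
  "(\<lambda>m. if even m then 2 * u ^ m / fact m else 0) sums (exp u + exp (- (u::real)))"
proof -
  have "(\<lambda>m. u ^ m /\<^sub>R fact m + (- u) ^ m /\<^sub>R fact m) sums (exp u + exp (- u))"
    by (intro sums_add exp_converges)
  moreover have "(\<lambda>m. u ^ m /\<^sub>R fact m + (- u) ^ m /\<^sub>R fact m) = (\<lambda>m. if even m then 2 * u ^ m / fact m else 0)"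
  proof
    fix m show "u ^ m /\<^sub>R fact m + (- u) ^ m /\<^sub>R fact m = (if even m then 2 * u ^ m / fact m else 0)"
      by (cases "even m") (auto simp: field_simps)
  qed
  ultimately show ?thesis by simp
qed

lemma exp_pair_term_nonneg: "0 \<le> (if even m then 2 * (u::real) ^ m / fact m else 0)"
  by (auto simp: zero_le_even_power)

lemma part1:
  fixes f :: "real \<Rightarrow> real" and p :: real and z :: "real \<times> real"
  assumes c1: "cond1 f" and me: "\<And>n. moment_exists f (2*n)" and p: "p > 0"
  shows "summable (\<lambda>n. gen_radial_moment f (2 * n) p * p ^ (2 * n) / (fact n)\<^sup>2 * norm z ^ (2 * n)) \<and>
     conv_beam f p z = p / pi * exp (- p * (norm z)\<^sup>2) *
        (\<Sum>n. gen_radial_moment f (2 * n) p * p ^ (2 * n) / (fact n)\<^sup>2 * norm z ^ (2 * n))"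
    (is "summable ?T \<and> _ = _ * suminf ?T")
proof -
  obtain F where F: "\<And>r. r \<ge> 0 \<Longrightarrow> 0 \<le> f r \<and> f r \<le> F" using c1 unfolding cond1_def by auto
  have F0: "0 \<le> F" using F[of 0] by auto
  have me0: "moment_exists f 0" using c1 unfolding cond1_def by auto
  define h where "h = (\<lambda>x::real. indicator {0..} x *\<^sub>R (f x * x ^ (0+1)))"
  have hm[measurable]: "h \<in> borel_measurable borel"
    using me0 unfolding moment_exists_def set_integrable_def h_def
    by (auto dest: borel_measurable_integrable)
  define f0 where "f0 = (\<lambda>s::real. if 0 < s then h s / s else 0)"
  have f0m[measurable]: "f0 \<in> borel_measurable borel" unfolding f0_def by measurable
  have f0_eq: "f0 s = (if 0 < s then f s else 0)" for s
    unfolding f0_def h_def by auto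
  have f0_nn: "0 \<le> f0 s" for s using F[of s] by (simp add: f0_eq)
  have f0_le: "f0 s \<le> F" for s using F[of s] F0 by (simp add: f0_eq)
  define R where "R = (fst z)\<^sup>2 + (snd z)\<^sup>2"
  have normz: "(norm z)\<^sup>2 = R" unfolding R_def by (rule norm_sq_prod)
  define g where "g = (\<lambda>s. ennreal (f0 s * exp (- p * s\<^sup>2)))"
  have gm[measurable]: "g \<in> borel_measurable borel" unfolding g_def by measurable
  define T where "T = (\<lambda>n. gen_radial_moment f (2 * n) p * p ^ (2 * n) / (fact n)\<^sup>2 * norm z ^ (2 * n))"
  define \<beta> where "\<beta> = (\<lambda>m. if even m then 2 * T (m div 2) else 0)"

  have mom: "(\<integral>\<^sup>+ s. g s * ennreal (indicator {0..} s * s^(2*n+1)) \<partial>lborel) = ennreal (gen_radial_moment f (2*n) p / (2*pi))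
     \<and> gen_radial_moment f (2*n) p \<ge> 0" for n
  proof -
    define k where "k = (\<lambda>s::real. indicator {0..} s *\<^sub>R (f s * s^(2*n+1) * exp (- p * s\<^sup>2)))"
    have i1: "integrable lborel (\<lambda>s::real. indicator {0..} s *\<^sub>R (f s * s^(2*n+1)))"
      using me[of n] unfolding moment_exists_def set_integrable_def by simp
    have km: "k \<in> borel_measurable borel"
    proof -
      have "k = (\<lambda>s. indicator {0..} s *\<^sub>R (f s * s^(2*n+1)) * exp (- p * s\<^sup>2))"
        unfolding k_def by (auto simp: fun_eq_iff)
      moreover have "(\<lambda>s::real. indicator {0..} s *\<^sub>R (f s * s^(2*n+1))) \<in> borel_measurable borel"
        using i1 by (auto dest: borel_measurable_integrable)
      ultimately show ?thesis by simp
    qed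
    have ik: "integrable lborel k"
    proof (rule Bochner_Integration.integrable_bound[OF i1])
      show "k \<in> borel_measurable lborel" using km by simp
      show "AE x in lborel. norm (k x) \<le> norm (indicator {0..} x *\<^sub>R (f x * x^(2*n+1)))"
      proof (rule AE_I2)
        fix x :: real
        have "exp (- p * x\<^sup>2) \<le> 1" using p by simp
        moreover have "exp (- p * x\<^sup>2) \<ge> 0" by simp
        moreover have "norm (k x) = norm (indicator {0..} x *\<^sub>R (f x * x^(2*n+1))) * exp (- p * x\<^sup>2)"
          unfolding k_def by (simp add: abs_mult)
        ultimately show "norm (k x) \<le> norm (indicator {0..} x *\<^sub>R (f x * x^(2*n+1)))"
          using mult_left_le[of "exp (- p * x\<^sup>2)" "norm (indicator {0..} x *\<^sub>R (f x * x^(2*n+1)))"] by simp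
      qed
    qed
    have knn: "0 \<le> k s" for s
      unfolding k_def using F[of s] by (auto split: split_indicator)
    have "(\<integral>\<^sup>+ s. g s * ennreal (indicator {0..} s * s^(2*n+1)) \<partial>lborel) = (\<integral>\<^sup>+ s. ennreal (k s) \<partial>lborel)"
    proof (rule nn_integral_cong)
      fix s :: real
      show "g s * ennreal (indicator {0..} s * s^(2*n+1)) = ennreal (k s)"
      proof (cases "0 < s")
        case True
        then have "g s * ennreal (indicator {0..} s * s^(2*n+1)) = ennreal (f s * exp (- p * s\<^sup>2)) * ennreal (s^(2*n+1))"
          unfolding g_def f0_eq by simp
        also have "\<dots> = ennreal (f s * exp (- p * s\<^sup>2) * s^(2*n+1))"
          using True by (subst ennreal_mult''[symmetric]) auto
        also have "\<dots> = ennreal (k s)"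
          unfolding k_def using True by (simp add: mult_ac)
        finally show ?thesis .
      next
        case False
        then show ?thesis unfolding g_def k_def f0_eq
          by (cases "s = 0") auto
      qed
    qed
    also have "\<dots> = ennreal (integral\<^sup>L lborel k)"
      using ik knn by (intro nn_integral_eq_integral) auto
    also have "integral\<^sup>L lborel k = gen_radial_moment f (2*n) p / (2*pi)"
      unfolding gen_radial_moment_def k_def set_lebesgue_integral_def by simp
    finally show ?thesis
      using integral_nonneg_AE[of k lborel] knn \<open>integral\<^sup>L lborel k = _\<close> by (auto simp: field_simps)
  qed
  have gen_nn: "gen_radial_moment f (2*n) p \<ge> 0" for n using mom by blast
  have T_nn: "T n \<ge> 0" for n unfolding T_def using gen_nn[of n] by auto

  have terms: "(\<integral>\<^sup>+ w. g (norm w) * ennreal (if even m then 2 * (2*p*qf z w)^m / fact m else 0) \<partial>lborel) = ennreal (\<beta> m)" for m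
  proof (cases "even m")
    case False
    then show ?thesis unfolding \<beta>_def by simp
  next
    case True
    then obtain n where m: "m = 2*n" by (auto elim: evenE)
    define C1 where "C1 = 2 * (2*p)^(2*n) / fact (2*n)"
    define C2 where "C2 = 2 * pi * fact (2*n) * R^n / (4^n * (fact n)\<^sup>2)"
    have C1: "C1 \<ge> 0" unfolding C1_def using p by simp
    have C2: "C2 \<ge> 0" unfolding C2_def R_def by simp
    have "(\<integral>\<^sup>+ w. g (norm w) * ennreal (if even m then 2 * (2*p*qf z w)^m / fact m else 0) \<partial>lborel) =
        (\<integral>\<^sup>+ w. ennreal C1 * (g (norm w) * ennreal (qf z w ^ (2*n))) \<partial>lborel)"
    proof (rule nn_integral_cong)
      fix w :: "real \<times> real"
      have "2 * (2*p*qf z w)^m / fact m = C1 * qf z w ^ (2*n)"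
        unfolding C1_def m by (simp add: power_mult_distrib)
      then have "ennreal (2 * (2*p*qf z w)^m / fact m) = ennreal C1 * ennreal (qf z w ^ (2*n))"
        using C1 by (simp add: ennreal_mult')
      then show "g (norm w) * ennreal (if even m then 2 * (2*p*qf z w)^m / fact m else 0) =
        ennreal C1 * (g (norm w) * ennreal (qf z w ^ (2*n)))"
        using True by (simp add: mult_ac)
    qed
    also have "\<dots> = ennreal C1 * (\<integral>\<^sup>+ w. g (norm w) * ennreal (qf z w ^ (2*n)) \<partial>lborel)"
      by (rule nn_integral_cmult) measurable
    also have "(\<integral>\<^sup>+ w. g (norm w) * ennreal (qf z w ^ (2*n)) \<partial>lborel) =
        ennreal C2 * (\<integral>\<^sup>+ s. g s * ennreal (indicator {0..} s * s^(2*n+1)) \<partial>lborel)"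
      unfolding C2_def R_def by (rule radial_final) (rule gm)
    also have "(\<integral>\<^sup>+ s. g s * ennreal (indicator {0..} s * s^(2*n+1)) \<partial>lborel) =
        ennreal (gen_radial_moment f (2*n) p / (2*pi))"
      using mom by blast
    also have "ennreal C1 * (ennreal C2 * ennreal (gen_radial_moment f (2*n) p / (2*pi))) =
        ennreal (C1 * (C2 * (gen_radial_moment f (2*n) p / (2*pi))))"
    proof -
      have G: "0 \<le> gen_radial_moment f (2*n) p / (2*pi)" using gen_nn[of n] by simp
      show ?thesis
        by (simp only: ennreal_mult[OF C2 G, symmetric] ennreal_mult[OF C1 mult_nonneg_nonneg[OF C2 G], symmetric])
    qed
    also have "C1 * (C2 * (gen_radial_moment f (2*n) p / (2*pi))) = \<beta> m"
    proof -
      have nz: "norm z ^ (2*n) = R ^ n" using normz by (simp add: power_mult)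
      have p4: "(2*p)^(2*n) = 4^n * p^(2*n)" by (simp add: power_mult_distrib power_mult)
      have t4: "(2::real)^(n*2) = 4^n" by (simp add: power_mult mult.commute[of n])
      have nz2: "norm z ^ (n*2) = R ^ n" using nz by (simp add: mult.commute[of n])
      show ?thesis unfolding \<beta>_def T_def C1_def C2_def m using True
        by (simp add: nz p4 t4 nz2 field_simps power2_eq_square)
    qed
    finally show ?thesis .
  qed

  have sumeq: "(\<integral>\<^sup>+ w. g (norm w) * ennreal (exp (2*p*qf z w) + exp (- (2*p*qf z w))) \<partial>lborel) = (\<Sum>m. ennreal (\<beta> m))"
  proof -
    have "(\<integral>\<^sup>+ w. g (norm w) * ennreal (exp (2*p*qf z w) + exp (- (2*p*qf z w))) \<partial>lborel) =
       (\<integral>\<^sup>+ w. (\<Sum>m. g (norm w) * ennreal (if even m then 2 * (2*p*qf z w)^m / fact m else 0)) \<partial>lborel)"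
    proof (rule nn_integral_cong)
      fix w :: "real \<times> real"
      have "ennreal (exp (2*p*qf z w) + exp (- (2*p*qf z w))) = (\<Sum>m. ennreal (if even m then 2 * (2*p*qf z w)^m / fact m else 0))"
        by (rule suminf_ennreal_eq[OF exp_pair_term_nonneg exp_pair_sums, symmetric])
      then show "g (norm w) * ennreal (exp (2*p*qf z w) + exp (- (2*p*qf z w))) =
         (\<Sum>m. g (norm w) * ennreal (if even m then 2 * (2*p*qf z w)^m / fact m else 0))"
        by simp
    qed
    also have "\<dots> = (\<Sum>m. (\<integral>\<^sup>+ w. g (norm w) * ennreal (if even m then 2 * (2*p*qf z w)^m / fact m else 0) \<partial>lborel))"
      by (rule nn_integral_suminf) measurable
    also have "\<dots> = (\<Sum>m. ennreal (\<beta> m))"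
      using terms by simp
    finally show ?thesis .
  qed

  define I where "I = (\<integral>\<^sup>+ w. g (norm w) * ennreal (exp (2*p*qf z w)) \<partial>lborel)"
  have sym: "(\<integral>\<^sup>+ w. g (norm w) * ennreal (exp (- (2*p*qf z w))) \<partial>lborel) = I"
  proof -
    have "I = (\<integral>\<^sup>+ w. g (norm (- w)) * ennreal (exp (2*p*qf z (- w))) \<partial>lborel)"
      unfolding I_def by (rule nn_integral_reflect2) measurable
    also have "\<dots> = (\<integral>\<^sup>+ w. g (norm w) * ennreal (exp (- (2*p*qf z w))) \<partial>lborel)"
    proof -
      have "qf z (- w) = - qf z w" for w by (simp add: qf_def)
      then show ?thesis by simp
    qed
    finally show ?thesis by simp
  qed
  have two: "I + I = (\<Sum>m. ennreal (\<beta> m))"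
  proof -
    have "(\<integral>\<^sup>+ w. g (norm w) * ennreal (exp (2*p*qf z w) + exp (- (2*p*qf z w))) \<partial>lborel) =
      (\<integral>\<^sup>+ w. g (norm w) * ennreal (exp (2*p*qf z w)) + g (norm w) * ennreal (exp (- (2*p*qf z w))) \<partial>lborel)"
      by (intro nn_integral_cong) (simp add: ennreal_plus distrib_left)
    also have "\<dots> = I + (\<integral>\<^sup>+ w. g (norm w) * ennreal (exp (- (2*p*qf z w))) \<partial>lborel)"
      unfolding I_def by (rule nn_integral_add) measurable
    finally show ?thesis using sumeq sym by simp
  qed
  have gb_nn: "0 \<le> gauss_beam p x" for x unfolding gauss_beam_def using p by simp
  have gbm[measurable]: "(\<lambda>w. gauss_beam p (z - w)) \<in> borel_measurable borel"
    unfolding gauss_beam_def by (intro borel_measurable_continuous_onI continuous_intros)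
  define K where "K = (\<lambda>w. f0 (norm w) * gauss_beam p (z - w))"
  have Km[measurable]: "K \<in> borel_measurable borel" unfolding K_def by measurable
  have K_nn: "0 \<le> K w" for w unfolding K_def using f0_nn gb_nn by simp
  have intK: "integrable lborel K"
  proof (rule Bochner_Integration.integrable_bound)
    show "integrable lborel (\<lambda>w. F * gauss_beam p (z - w))"
      using gb_integral[OF p, of z] by (intro integrable_mult_right) (simp add: has_bochner_integral_iff)
    show "K \<in> borel_measurable lborel" by simp
    show "AE w in lborel. norm (K w) \<le> norm (F * gauss_beam p (z - w))"
    proof (rule AE_I2)
      fix w :: "real \<times> real"
      have "f0 (norm w) * gauss_beam p (z - w) \<le> F * gauss_beam p (z - w)"
        by (rule mult_right_mono[OF f0_le gb_nn])
      then show "norm (K w) \<le> norm (F * gauss_beam p (z - w))"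
        unfolding K_def using f0_nn[of "norm w"] gb_nn[of "z - w"] F0 by (simp add: abs_mult)
    qed
  qed
  have fn_eq: "(\<lambda>x::real\<times>real. f (norm x)) = (\<lambda>x. if x = 0 then f 0 else f0 (norm x))"
    by (auto simp: fun_eq_iff f0_eq)
  have fnm[measurable]: "(\<lambda>x::real\<times>real. f (norm x)) \<in> borel_measurable borel"
    unfolding fn_eq by measurable
  have Km': "(\<lambda>w. f0 (norm w) * gauss_beam p (z - w)) \<in> borel_measurable lborel"
    using Km unfolding K_def by simp
  have AEeq: "AE w in lborel. f (norm w) * gauss_beam p (z - w) = K w"
    using AE_lborel_singleton[of "0::real\<times>real"] by eventually_elim (simp add: f0_eq K_def)
  have m1: "(\<lambda>w. f (norm w) * gauss_beam p (z - w)) \<in> borel_measurable lborel"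
    by simp
  have convK: "conv_beam f p z = integral\<^sup>L lborel K"
    unfolding conv_beam_def using m1 Km AEeq by (intro integral_cong_AE) auto
  define c where "c = p / pi * exp (- p * R)"
  have c_pos: "c > 0" unfolding c_def using p by simp
  have Kpt: "ennreal (K w) = ennreal c * (g (norm w) * ennreal (exp (2*p*qf z w)))" for w
  proof -
    have ex: "- p * ((fst z - fst w)\<^sup>2 + (snd z - snd w)\<^sup>2) = - p * R + - p * (norm w)\<^sup>2 + 2*p*qf z w"
      by (simp add: R_def norm_sq_prod qf_def power2_diff algebra_simps)
    have "K w = c * ((f0 (norm w) * exp (- p * (norm w)\<^sup>2)) * exp (2*p*qf z w))"
    proof -
      have e2: "exp (- p * ((fst z - fst w)\<^sup>2 + (snd z - snd w)\<^sup>2)) = exp (- p * R) * exp (- p * (norm w)\<^sup>2) * exp (2*p*qf z w)"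
        unfolding ex by (simp only: exp_add)
      show ?thesis
        unfolding K_def gauss_beam_def c_def fst_diff snd_diff e2 by (simp add: mult_ac)
    qed
    moreover have "0 \<le> f0 (norm w) * exp (- p * (norm w)\<^sup>2)" using f0_nn by simp
    ultimately show ?thesis unfolding g_def using c_pos
      by (simp add: ennreal_mult)
  qed
  have "ennreal (integral\<^sup>L lborel K) = (\<integral>\<^sup>+ w. ennreal (K w) \<partial>lborel)"
    using intK K_nn by (intro nn_integral_eq_integral[symmetric]) auto
  also have "\<dots> = ennreal c * I"
    unfolding Kpt I_def by (rule nn_integral_cmult) measurable
  finally have cI: "ennreal c * I = ennreal (conv_beam f p z)" using convK by simp
  have conv_nn: "conv_beam f p z \<ge> 0" using convK K_nn integral_nonneg_AE[of K lborel] by simp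
  have I_val: "I = ennreal (conv_beam f p z / c)"
  proof -
    have "I = ennreal (1 / c) * (ennreal c * I)"
      using c_pos by (simp add: mult.assoc[symmetric] ennreal_mult[symmetric])
    also have "\<dots> = ennreal (conv_beam f p z / c)"
      unfolding cI using c_pos conv_nn by (simp add: ennreal_mult[symmetric])
    finally show ?thesis .
  qed
  have beta_nn: "0 \<le> \<beta> m" for m unfolding \<beta>_def using T_nn by simp
  have sum_val: "(\<Sum>m. ennreal (\<beta> m)) = ennreal (2 * (conv_beam f p z / c))"
    using two I_val c_pos conv_nn by (simp add: ennreal_plus[symmetric])
  have sb: "summable \<beta>"
    using sum_val beta_nn by (intro summable_suminf_not_top) auto
  have "ennreal (suminf \<beta>) = ennreal (2 * (conv_beam f p z / c))"
    using sum_val suminf_ennreal2[OF beta_nn sb] by simp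
  then have "suminf \<beta> = 2 * (conv_beam f p z / c)"
    using suminf_nonneg[OF sb beta_nn] c_pos conv_nn by (subst (asm) ennreal_inj) auto
  then have bs: "\<beta> sums (2 * (conv_beam f p z / c))" using sb by (simp add: sums_iff)
  have "(\<lambda>n. \<beta> (2*n)) sums (2 * (conv_beam f p z / c))"
  proof (subst sums_mono_reindex)
    show "strict_mono (\<lambda>n::nat. 2*n)" by (auto simp: strict_mono_def)
    show "\<beta> m = 0" if "m \<notin> range (\<lambda>n. 2*n)" for m
      using that unfolding \<beta>_def by (auto elim!: evenE)
  qed (rule bs)
  then have "(\<lambda>n. 2 * T n) sums (2 * (conv_beam f p z / c))" unfolding \<beta>_def by simp
  then have "(\<lambda>n. 2 * T n / 2) sums (2 * (conv_beam f p z / c) / 2)" by (rule sums_divide)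
  then have Ts: "T sums (conv_beam f p z / c)" by simp
  show ?thesis unfolding T_def[symmetric]
  proof
    show "summable T" using Ts by (rule sums_summable)
    have "suminf T = conv_beam f p z / c" using Ts by (rule sums_unique[symmetric])
    then have "conv_beam f p z = c * suminf T" using c_pos by (simp add: field_simps)
    then show "conv_beam f p z = p / pi * exp (- p * (norm z)\<^sup>2) * suminf T"
      unfolding c_def normz .
  qed
qed

lemma pow_fact_le_exp:
  assumes "0 \<le> (x::real)"
  shows "x ^ k / fact k \<le> exp x"
proof -
  have s: "(\<lambda>k. x ^ k / fact k) sums exp x"
    using exp_converges[of x] by (simp add: divide_inverse mult.commute)
  have "sum (\<lambda>k. x ^ k / fact k) {k} \<le> suminf (\<lambda>k. x ^ k / fact k)"
    using assms by (intro sum_le_suminf) (auto intro: sums_summable[OF s])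
  then show ?thesis using s by (simp add: sums_iff)
qed

lemma laguerre_bound:
  assumes "0 \<le> x"
  shows "\<bar>laguerre n x\<bar> \<le> 2 ^ n * exp x"
proof -
  have "\<bar>laguerre n x\<bar> \<le> (\<Sum>k\<le>n. \<bar>(-1) ^ k * real (n choose k) * x ^ k / fact k\<bar>)"
    unfolding laguerre_def by (rule sum_abs)
  also have "\<dots> \<le> (\<Sum>k\<le>n. real (n choose k) * exp x)"
  proof (rule sum_mono)
    fix k assume "k \<in> {..n}"
    have "\<bar>(-1) ^ k * real (n choose k) * x ^ k / fact k\<bar> = real (n choose k) * (x ^ k / fact k)"
      using assms by (simp add: abs_mult)
    also have "\<dots> \<le> real (n choose k) * exp x"
      using pow_fact_le_exp[OF assms, of k] by (intro mult_left_mono) auto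
    finally show "\<bar>(-1) ^ k * real (n choose k) * x ^ k / fact k\<bar> \<le> real (n choose k) * exp x" .
  qed
  also have "\<dots> = 2 ^ n * exp x"
    by (simp add: sum_distrib_right[symmetric] of_nat_sum[symmetric] choose_row_sum)
  finally show ?thesis .
qed

lemma summable_B: "summable (\<lambda>n. (x::real) ^ n * y ^ n / (fact n)\<^sup>2)"
proof -
  have "summable (\<lambda>n. \<bar>x * y\<bar> ^ n / fact n)"
    using exp_converges[of "\<bar>x * y\<bar>"] by (simp add: sums_iff divide_inverse mult.commute)
  then show ?thesis
  proof (rule summable_comparison_test')
    fix n :: nat assume "n \<ge> 0"
    have "norm (x ^ n * y ^ n / (fact n)\<^sup>2) = \<bar>x * y\<bar> ^ n / fact n / fact n"
      by (simp add: abs_mult power_mult_distrib power2_eq_square power_abs)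
    also have "\<dots> \<le> \<bar>x * y\<bar> ^ n / fact n"
      using fact_ge_1[of n, where 'a=real] by (simp add: divide_le_eq mult_le_cancel_left1)
    finally show "norm (x ^ n * y ^ n / (fact n)\<^sup>2) \<le> \<bar>x * y\<bar> ^ n / fact n" .
  qed
qed

lemma laguerre_series:
  "(\<lambda>n. (-1) ^ n * y ^ n / fact n * laguerre n x) sums (exp (- y) * (\<Sum>n. x ^ n * y ^ n / (fact n)\<^sup>2))"
proof -
  define a where "a = (\<lambda>k. (- y) ^ k / fact k)"
  define b where "b = (\<lambda>k. x ^ k * y ^ k / (fact k)\<^sup>2)"
  have sa: "summable (\<lambda>k. norm (a k))"
    using exp_converges[of "\<bar>y\<bar>"] unfolding a_def by (simp add: sums_iff divide_inverse mult.commute power_abs abs_mult)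
  have sb: "summable (\<lambda>k. norm (b k))"
    using summable_B[of "\<bar>x\<bar>" "\<bar>y\<bar>"] unfolding b_def by (simp add: power_abs abs_mult)
  have ea: "suminf a = exp (- y)"
    using exp_converges[of "- y"] unfolding a_def by (simp add: sums_iff divide_inverse mult.commute)
  have "(\<lambda>k. \<Sum>i\<le>k. a i * b (k - i)) sums (suminf a * suminf b)"
    by (rule Cauchy_product_sums[OF sa sb])
  moreover have "(\<Sum>i\<le>k. a i * b (k - i)) = (-1) ^ k * y ^ k / fact k * laguerre k x" for k
  proof -
    have "(\<Sum>i\<le>k. a i * b (k - i)) = (\<Sum>j\<le>k. a (k - j) * b j)"
      by (rule sum.reindex_bij_witness[where i="\<lambda>i. k - i" and j="\<lambda>i. k - i"]) auto
    also have "\<dots> = (\<Sum>j\<le>k. (-1) ^ k * y ^ k / fact k * ((-1) ^ j * real (k choose j) * x ^ j / fact j))"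
    proof (rule sum.cong[OF refl])
      fix j assume "j \<in> {..k}"
      then have jk: "j \<le> k" by simp
      have ch: "real (k choose j) = fact k / (fact j * fact (k - j))"
        using jk by (rule binomial_fact)
      have y: "y ^ k = y ^ (k - j) * y ^ j" using jk by (simp add: power_add[symmetric])
      have s: "(-1::real) ^ k * (-1) ^ j = (-1) ^ (k - j)"
      proof -
        have e: "(-1::real)^k = (-1)^(k-j) * (-1)^j"
          using jk by (metis le_add_diff_inverse2 power_add)
        have o: "(-1::real)^j * (-1)^j = 1" by (simp add: power_mult_distrib[symmetric])
        show ?thesis unfolding e using o by (simp add: mult.assoc)
      qed
      have "(-1) ^ k * y ^ k / fact k * ((-1) ^ j * real (k choose j) * x ^ j / fact j)
          = ((-1) ^ k * (-1) ^ j) * y ^ (k - j) * y ^ j * x ^ j / (fact j * fact (k - j) * fact j)"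
        unfolding ch y by (simp add: field_simps)
      also have "\<dots> = a (k - j) * b j"
        unfolding s a_def b_def by (simp add: power_minus' power_mult_distrib field_simps power2_eq_square)
      finally show "a (k - j) * b j = (-1) ^ k * y ^ k / fact k * ((-1) ^ j * real (k choose j) * x ^ j / fact j)" by simp
    qed
    also have "\<dots> = (-1) ^ k * y ^ k / fact k * laguerre k x"
      unfolding laguerre_def by (simp add: sum_distrib_left)
    finally show ?thesis .
  qed
  ultimately show ?thesis unfolding ea b_def by simp
qed

lemma rm_nonneg:
  assumes "cond1 f"
  shows "radial_moment f m \<ge> 0"
proof -
  obtain F where F: "\<And>r. r \<ge> 0 \<Longrightarrow> 0 \<le> f r \<and> f r \<le> F" using assms unfolding cond1_def by auto
  have "0 \<le> (\<integral>r. indicator {0..} r *\<^sub>R (f r * r ^ (m + 1)) \<partial>lborel)"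
    by (rule integral_nonneg_AE) (auto intro!: AE_I2 simp: F split: split_indicator)
  then show ?thesis unfolding radial_moment_def set_lebesgue_integral_def by simp
qed

lemma c2b_summable:
  assumes c1: "cond1 f" and c2: "cond2b f" and q: "q > 0"
  shows "summable (\<lambda>n. radial_moment f (2*n) * q^n / fact n)"
proof -
  define c where "c = radial_moment f"
  have c_nn: "c m \<ge> 0" for m unfolding c_def using rm_nonneg[OF c1] .
  define \<epsilon> where "\<epsilon> = sqrt (1 / (4 * q * exp 1))"
  have \<epsilon>: "\<epsilon> > 0" unfolding \<epsilon>_def using q by simp
  have \<epsilon>2: "2 * \<epsilon>\<^sup>2 * q * exp 1 = 1/2" unfolding \<epsilon>_def using q by simp
  have "(\<lambda>n. c n powr (1 / real n)) \<in> o(\<lambda>n. sqrt (real n))"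
    using c2 unfolding cond2b_def c_def by simp
  from landau_o.smallD[OF this \<epsilon>]
  have "eventually (\<lambda>m. norm (c m powr (1 / real m)) \<le> \<epsilon> * norm (sqrt (real m))) sequentially" .
  then obtain N where N: "\<And>m. m \<ge> N \<Longrightarrow> norm (c m powr (1 / real m)) \<le> \<epsilon> * norm (sqrt (real m))"
    unfolding eventually_sequentially by blast
  have cb: "c m \<le> (\<epsilon> * sqrt (real m)) ^ m" if m: "m \<ge> N" "m \<ge> 1" for m
  proof (cases "c m = 0")
    case True then show ?thesis using \<epsilon> by simp
  next
    case False
    then have cp: "c m > 0" using c_nn[of m] by simp
    have "c m = (c m powr (1 / real m)) ^ m"
    proof -
      have "(c m powr (1 / real m)) ^ m = (c m powr (1 / real m)) powr real m"
        using cp by (simp add: powr_realpow)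
      also have "\<dots> = c m powr (1 / real m * real m)" by (simp add: powr_powr)
      also have "\<dots> = c m" using m cp by simp
      finally show ?thesis by simp
    qed
    also have "\<dots> \<le> (\<epsilon> * sqrt (real m)) ^ m"
    proof (rule power_mono)
      show "c m powr (1 / real m) \<le> \<epsilon> * sqrt (real m)"
        using N[OF m(1)] by simp
    qed simp
    finally show ?thesis .
  qed
  show ?thesis
  proof (rule summable_comparison_test'[where N="max N 1"])
    show "summable (\<lambda>n. (1/2::real) ^ n)" by (rule summable_geometric) simp
    fix n :: nat assume n: "n \<ge> max N 1"
    have "c (2*n) \<le> (\<epsilon> * sqrt (real (2*n))) ^ (2*n)"
      using n by (intro cb) auto
    also have "\<dots> = (2 * \<epsilon>\<^sup>2 * real n) ^ n"
      by (simp add: power_mult power_mult_distrib)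
    finally have c2n: "c (2*n) \<le> (2 * \<epsilon>\<^sup>2 * real n) ^ n" .
    have "norm (c (2*n) * q^n / fact n) = c (2*n) * q^n / fact n"
      using c_nn q by simp
    also have "\<dots> \<le> (2 * \<epsilon>\<^sup>2 * real n) ^ n * q^n / fact n"
      using c2n q by (intro divide_right_mono mult_right_mono) auto
    also have "\<dots> = (2 * \<epsilon>\<^sup>2 * q) ^ n * (real n ^ n / fact n)"
      by (simp add: power_mult_distrib)
    also have "\<dots> \<le> (2 * \<epsilon>\<^sup>2 * q) ^ n * exp (real n)"
      using q by (intro mult_left_mono pow_fact_le_exp) auto
    also have "\<dots> = (2 * \<epsilon>\<^sup>2 * q * exp 1) ^ n"
      by (simp add: power_mult_distrib exp_of_nat_mult[symmetric])
    also have "\<dots> = (1/2) ^ n" by (simp only: \<epsilon>2)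
    finally show "norm (radial_moment f (2*n) * q^n / fact n) \<le> (1/2) ^ n" unfolding c_def .
  qed
qed

lemma k_int:
  assumes c1: "cond1 f" and me: "moment_exists f (2*n)" and p: "p > 0"
  shows "integrable lborel (\<lambda>s::real. indicator {0..} s *\<^sub>R (f s * s^(2*n+1) * exp (- p * s\<^sup>2)))"
proof -
  define k where "k = (\<lambda>s::real. indicator {0..} s *\<^sub>R (f s * s^(2*n+1) * exp (- p * s\<^sup>2)))"
  have i1: "integrable lborel (\<lambda>s::real. indicator {0..} s *\<^sub>R (f s * s^(2*n+1)))"
    using me unfolding moment_exists_def set_integrable_def by simp
  have km: "k \<in> borel_measurable borel"
  proof -
    have "k = (\<lambda>s. indicator {0..} s *\<^sub>R (f s * s^(2*n+1)) * exp (- p * s\<^sup>2))"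
      unfolding k_def by (auto simp: fun_eq_iff)
    moreover have "(\<lambda>s::real. indicator {0..} s *\<^sub>R (f s * s^(2*n+1))) \<in> borel_measurable borel"
      using i1 by (auto dest: borel_measurable_integrable)
    ultimately show ?thesis by simp
  qed
  have "integrable lborel k"
  proof (rule Bochner_Integration.integrable_bound[OF i1])
    show "k \<in> borel_measurable lborel" using km by simp
    show "AE x in lborel. norm (k x) \<le> norm (indicator {0..} x *\<^sub>R (f x * x^(2*n+1)))"
    proof (rule AE_I2)
      fix x :: real
      have "exp (- p * x\<^sup>2) \<le> 1" using p by simp
      moreover have "exp (- p * x\<^sup>2) \<ge> 0" by simp
      moreover have "norm (k x) = norm (indicator {0..} x *\<^sub>R (f x * x^(2*n+1))) * exp (- p * x\<^sup>2)"
        unfolding k_def by (simp add: abs_mult)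
      ultimately show "norm (k x) \<le> norm (indicator {0..} x *\<^sub>R (f x * x^(2*n+1)))"
        using mult_left_le[of "exp (- p * x\<^sup>2)" "norm (indicator {0..} x *\<^sub>R (f x * x^(2*n+1)))"] by simp
    qed
  qed
  then show ?thesis unfolding k_def .
qed

lemma part2:
  fixes f :: "real \<Rightarrow> real" and p :: real and z :: "real \<times> real"
  assumes c1: "cond1 f" and c2: "cond2b f" and p: "p > 0"
  shows "summable (\<lambda>n. (-1) ^ n * radial_moment f (2 * n) * p ^ n / fact n * laguerre n (p * (norm z)\<^sup>2)) \<and>
    (\<Sum>n. (-1) ^ n * radial_moment f (2 * n) * p ^ n / fact n * laguerre n (p * (norm z)\<^sup>2)) =
    (\<Sum>n. gen_radial_moment f (2 * n) p * p ^ (2 * n) / (fact n)\<^sup>2 * norm z ^ (2 * n))"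
    (is "summable ?U \<and> suminf ?U = suminf ?T")
proof -
  obtain F where F: "\<And>r. r \<ge> 0 \<Longrightarrow> 0 \<le> f r \<and> f r \<le> F" using c1 unfolding cond1_def by auto
  have me: "moment_exists f (2*n)" for n using c2 unfolding cond2b_def by auto
  define x where "x = p * (norm z)\<^sup>2"
  have x0: "x \<ge> 0" unfolding x_def using p by simp
  define k where "k = (\<lambda>n (s::real). indicator {0..} s *\<^sub>R (f s * s^(2*n+1) * exp (- p * s\<^sup>2)))"
  define m where "m = (\<lambda>n (s::real). indicator {0..} s *\<^sub>R (f s * s^(2*n+1)))"
  define Ct where "Ct = (\<lambda>n. 2 * pi * p^(2*n) * (norm z)^(2*n) / (fact n)\<^sup>2)"
  define Cu where "Cu = (\<lambda>n. 2 * pi * ((-1) ^ n * p ^ n / fact n * laguerre n x))"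
  define S where "S = (\<lambda>s. 2 * pi * (indicator {0..} s * f s * s) * exp (- p * s\<^sup>2) *
     (\<Sum>n. x ^ n * (p * s\<^sup>2) ^ n / (fact n)\<^sup>2))"
  have ik: "integrable lborel (k n)" for n unfolding k_def using k_int[OF c1 me p] .
  have im: "integrable lborel (m n)" for n using me[of n] unfolding m_def moment_exists_def set_integrable_def by simp
  have k_nn: "k n s \<ge> 0" for n s unfolding k_def using F[of s] by (auto split: split_indicator)
  have m_nn: "m n s \<ge> 0" for n s unfolding m_def using F[of s] by (auto split: split_indicator)
  have Ct_nn: "Ct n \<ge> 0" for n unfolding Ct_def using p by simp
  have T_eq: "?T n = integral\<^sup>L lborel (\<lambda>s. Ct n * k n s)" for n
  proof -
    have "integral\<^sup>L lborel (\<lambda>s. Ct n * k n s) = Ct n * integral\<^sup>L lborel (k n)" by simp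
    moreover have "?T n = Ct n * integral\<^sup>L lborel (k n)"
      unfolding Ct_def k_def gen_radial_moment_def set_lebesgue_integral_def
      by (simp add: field_simps)
    ultimately show ?thesis by simp
  qed
  have U_eq: "?U n = integral\<^sup>L lborel (\<lambda>s. Cu n * m n s)" for n
  proof -
    have "integral\<^sup>L lborel (\<lambda>s. Cu n * m n s) = Cu n * integral\<^sup>L lborel (m n)" by simp
    moreover have "?U n = Cu n * integral\<^sup>L lborel (m n)"
      unfolding Cu_def m_def radial_moment_def set_lebesgue_integral_def x_def
      by (simp add: field_simps)
    ultimately show ?thesis by simp
  qed
  have t_sums: "(\<lambda>n. Ct n * k n s) sums S s" for s
  proof -
    define y where "y = p * s\<^sup>2"
    have "(\<lambda>n. (2 * pi * (indicator {0..} s * f s * s) * exp (- y)) * (x ^ n * y ^ n / (fact n)\<^sup>2)) sums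
      ((2 * pi * (indicator {0..} s * f s * s) * exp (- y)) * (\<Sum>n. x ^ n * y ^ n / (fact n)\<^sup>2))"
      by (intro sums_mult summable_sums summable_B)
    moreover have "(2 * pi * (indicator {0..} s * f s * s) * exp (- y)) * (x ^ n * y ^ n / (fact n)\<^sup>2) = Ct n * k n s" for n
      unfolding Ct_def k_def x_def y_def
      by (simp add: power_mult_distrib power_mult power2_eq_square field_simps split: split_indicator)
    ultimately show ?thesis unfolding S_def y_def by simp
  qed
  have u_sums: "(\<lambda>n. Cu n * m n s) sums S s" for s
  proof -
    define y where "y = p * s\<^sup>2"
    have "(\<lambda>n. (2 * pi * (indicator {0..} s * f s * s)) * ((-1) ^ n * y ^ n / fact n * laguerre n x)) sums
      ((2 * pi * (indicator {0..} s * f s * s)) * (exp (- y) * (\<Sum>n. x ^ n * y ^ n / (fact n)\<^sup>2)))"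
      by (intro sums_mult laguerre_series)
    moreover have "(2 * pi * (indicator {0..} s * f s * s)) * ((-1) ^ n * y ^ n / fact n * laguerre n x) = Cu n * m n s" for n
      unfolding Cu_def m_def y_def
      by (simp add: power_mult_distrib power_mult power2_eq_square field_simps split: split_indicator)
    ultimately show ?thesis unfolding S_def y_def by (simp add: mult_ac)
  qed
  have Cu_bd: "\<bar>Cu n\<bar> \<le> 2 * pi * exp x * ((2*p)^n / fact n)" for n
  proof -
    have "\<bar>Cu n\<bar> = 2 * pi * (p ^ n / fact n) * \<bar>laguerre n x\<bar>"
      unfolding Cu_def using p by (simp add: abs_mult)
    also have "\<dots> \<le> 2 * pi * (p ^ n / fact n) * (2 ^ n * exp x)"
      using laguerre_bound[OF x0, of n] p by (intro mult_left_mono) auto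
    also have "\<dots> = 2 * pi * exp x * ((2*p)^n / fact n)"
      by (simp add: power_mult_distrib field_simps)
    finally show ?thesis .
  qed
  have sT: "summable ?T" using part1[OF c1 me p, of z] by blast
  have T_sums: "?T sums integral\<^sup>L lborel S"
  proof -
    have "(\<lambda>n. integral\<^sup>L lborel (\<lambda>s. Ct n * k n s)) sums (\<integral>s. (\<Sum>n. Ct n * k n s) \<partial>lborel)"
    proof (rule sums_integral)
      show "integrable lborel (\<lambda>s. Ct n * k n s)" for n using ik by simp
      show "AE s in lborel. summable (\<lambda>n. norm (Ct n * k n s))"
        using t_sums Ct_nn k_nn by (auto intro!: AE_I2 simp: abs_mult sums_iff)
      show "summable (\<lambda>n. \<integral>s. norm (Ct n * k n s) \<partial>lborel)"
      proof -
        have "(\<lambda>n. \<integral>s. norm (Ct n * k n s) \<partial>lborel) = ?T"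
        proof
          fix n
          have "(\<lambda>s. norm (Ct n * k n s)) = (\<lambda>s. Ct n * k n s)"
            using Ct_nn k_nn by (auto simp: fun_eq_iff abs_mult)
          then show "(\<integral>s. norm (Ct n * k n s) \<partial>lborel) = ?T n" using T_eq by simp
        qed
        then show ?thesis using sT by simp
      qed
    qed
    moreover have "(\<lambda>s. (\<Sum>n. Ct n * k n s)) = S" using t_sums by (auto simp: sums_iff fun_eq_iff)
    ultimately show ?thesis using T_eq by simp
  qed
  have U_sums: "?U sums integral\<^sup>L lborel S"
  proof -
    have "(\<lambda>n. integral\<^sup>L lborel (\<lambda>s. Cu n * m n s)) sums (\<integral>s. (\<Sum>n. Cu n * m n s) \<partial>lborel)"
    proof (rule sums_integral)
      show "integrable lborel (\<lambda>s. Cu n * m n s)" for n using im by simp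
      show "AE s in lborel. summable (\<lambda>n. norm (Cu n * m n s))"
      proof (rule AE_I2)
        fix s :: real
        define D where "D = 2 * pi * exp x * (indicator {0..} s * f s * s)"
        have "summable (\<lambda>n. (2 * p * s\<^sup>2) ^ n / fact n)"
          using exp_converges[of "2 * p * s\<^sup>2"] by (simp add: sums_iff divide_inverse mult.commute)
        then have "summable (\<lambda>n. D * ((2 * p * s\<^sup>2) ^ n / fact n))" by (rule summable_mult)
        then show "summable (\<lambda>n. norm (Cu n * m n s))"
        proof (rule summable_comparison_test')
          fix n :: nat assume "n \<ge> 0"
          have "norm (norm (Cu n * m n s)) = \<bar>Cu n\<bar> * m n s" using m_nn[of n s] by (simp add: abs_mult)
          also have "\<dots> \<le> (2 * pi * exp x * ((2*p)^n / fact n)) * m n s"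
            using Cu_bd[of n] m_nn[of n s] by (rule mult_right_mono)
          also have "\<dots> = D * ((2 * p * s\<^sup>2) ^ n / fact n)"
            unfolding D_def m_def by (simp add: power_mult_distrib power_mult power2_eq_square field_simps split: split_indicator)
          finally show "norm (norm (Cu n * m n s)) \<le> D * ((2 * p * s\<^sup>2) ^ n / fact n)" .
        qed
      qed
      show "summable (\<lambda>n. \<integral>s. norm (Cu n * m n s) \<partial>lborel)"
      proof -
        have "summable (\<lambda>n. exp x * (radial_moment f (2*n) * (2*p)^n / fact n))"
          using c2b_summable[OF c1 c2, of "2*p"] p by (intro summable_mult) simp
        then show ?thesis
        proof (rule summable_comparison_test')
          fix n :: nat assume "n \<ge> 0"
          have im_eq: "integral\<^sup>L lborel (m n) = radial_moment f (2*n) / (2*pi)"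
            unfolding m_def radial_moment_def set_lebesgue_integral_def by simp
          have "(\<lambda>s. norm (Cu n * m n s)) = (\<lambda>s. \<bar>Cu n\<bar> * m n s)"
            using m_nn by (auto simp: fun_eq_iff abs_mult)
          then have e1: "(\<integral>s. norm (Cu n * m n s) \<partial>lborel) = \<bar>Cu n\<bar> * (radial_moment f (2*n) / (2*pi))"
            using im_eq by simp
          have e2: "\<bar>Cu n\<bar> * (radial_moment f (2*n) / (2*pi)) \<le> (2 * pi * exp x * ((2*p)^n / fact n)) * (radial_moment f (2*n) / (2*pi))"
            using Cu_bd[of n] rm_nonneg[OF c1, of "2*n"] by (intro mult_right_mono) auto
          have e3: "(2 * pi * exp x * ((2*p)^n / fact n)) * (radial_moment f (2*n) / (2*pi)) = exp x * (radial_moment f (2*n) * (2*p)^n / fact n)"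
            by (simp add: field_simps)
          have e0: "(\<integral>s. norm (Cu n * m n s) \<partial>lborel) \<ge> 0" by simp
          have "norm (\<integral>s. norm (Cu n * m n s) \<partial>lborel) = (\<integral>s. norm (Cu n * m n s) \<partial>lborel)"
            using e0 by simp
          also have "\<dots> = \<bar>Cu n\<bar> * (radial_moment f (2*n) / (2*pi))" by (rule e1)
          also have "\<dots> \<le> (2 * pi * exp x * ((2*p)^n / fact n)) * (radial_moment f (2*n) / (2*pi))" by (rule e2)
          also have "\<dots> = exp x * (radial_moment f (2*n) * (2*p)^n / fact n)" by (rule e3)
          finally show "norm (\<integral>s. norm (Cu n * m n s) \<partial>lborel) \<le> exp x * (radial_moment f (2*n) * (2*p)^n / fact n)" .
        qed
      qed
    qed
    moreover have "(\<lambda>s. (\<Sum>n. Cu n * m n s)) = S" using u_sums by (auto simp: sums_iff fun_eq_iff)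
    ultimately show ?thesis using U_eq by simp
  qed
  show ?thesis using U_sums T_sums sT by (simp add: sums_iff)
qed

theorem mainTheorem1:
  fixes f :: "real \<Rightarrow> real" and p :: real
  assumes "cond1 f" and "cond2a f" and "p > 0"
  shows "(\<forall>z :: real \<times> real. let r = norm z in
            summable (\<lambda>n. gen_radial_moment f (2 * n) p * p ^ (2 * n) / (fact n)\<^sup>2 * r ^ (2 * n)) \<and>
            conv_beam f p z = p / pi * exp (- p * r\<^sup>2) *
              (\<Sum>n. gen_radial_moment f (2 * n) p * p ^ (2 * n) / (fact n)\<^sup>2 * r ^ (2 * n)))
       \<and> (cond2b f \<longrightarrow>
          (\<forall>z :: real \<times> real. let r = norm z in
            summable (\<lambda>n. (-1) ^ n * radial_moment f (2 * n) * p ^ n / fact n * laguerre n (p * r\<^sup>2)) \<and>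
            conv_beam f p z = p / pi * exp (- p * r\<^sup>2) *
              (\<Sum>n. (-1) ^ n * radial_moment f (2 * n) * p ^ n / fact n * laguerre n (p * r\<^sup>2))))"
proof -
  have me: "\<And>n. moment_exists f (2*n)" using assms(2) unfolding cond2a_def by auto
  have P1: "\<forall>z :: real \<times> real. let r = norm z in
            summable (\<lambda>n. gen_radial_moment f (2 * n) p * p ^ (2 * n) / (fact n)\<^sup>2 * r ^ (2 * n)) \<and>
            conv_beam f p z = p / pi * exp (- p * r\<^sup>2) *
              (\<Sum>n. gen_radial_moment f (2 * n) p * p ^ (2 * n) / (fact n)\<^sup>2 * r ^ (2 * n))"
    using part1[OF assms(1) me assms(3)] by (simp add: Let_def)
  have P2: "cond2b f \<longrightarrow>
          (\<forall>z :: real \<times> real. let r = norm z in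
            summable (\<lambda>n. (-1) ^ n * radial_moment f (2 * n) * p ^ n / fact n * laguerre n (p * r\<^sup>2)) \<and>
            conv_beam f p z = p / pi * exp (- p * r\<^sup>2) *
              (\<Sum>n. (-1) ^ n * radial_moment f (2 * n) * p ^ n / fact n * laguerre n (p * r\<^sup>2)))"
  proof (intro impI allI)
    fix z :: "real \<times> real"
    assume c2: "cond2b f"
    have A: "conv_beam f p z = p / pi * exp (- p * (norm z)\<^sup>2) *
        (\<Sum>n. gen_radial_moment f (2 * n) p * p ^ (2 * n) / (fact n)\<^sup>2 * norm z ^ (2 * n))"
      using part1[OF assms(1) me assms(3)] by blast
    have B: "summable (\<lambda>n. (-1) ^ n * radial_moment f (2 * n) * p ^ n / fact n * laguerre n (p * (norm z)\<^sup>2)) \<and>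
      (\<Sum>n. (-1) ^ n * radial_moment f (2 * n) * p ^ n / fact n * laguerre n (p * (norm z)\<^sup>2)) =
      (\<Sum>n. gen_radial_moment f (2 * n) p * p ^ (2 * n) / (fact n)\<^sup>2 * norm z ^ (2 * n))"
      by (rule part2[OF assms(1) c2 assms(3)])
    show "let r = norm z in
            summable (\<lambda>n. (-1) ^ n * radial_moment f (2 * n) * p ^ n / fact n * laguerre n (p * r\<^sup>2)) \<and>
            conv_beam f p z = p / pi * exp (- p * r\<^sup>2) *
              (\<Sum>n. (-1) ^ n * radial_moment f (2 * n) * p ^ n / fact n * laguerre n (p * r\<^sup>2))"
      unfolding Let_def using A B by simp
  qed
  show ?thesis using P1 P2 by blast
qed


end
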